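(* Let $\beta=0$, $R\ge0$, $D>0$, and let $\alpha_\infty^D$ be the maximum value of $\alpha_0$ over all numerical walls for the Chern character $(-R,0,D,0)$ on $\mathbb{P}^3$. Then $D-2<\alpha_\infty^D\le D$.
   Context: On $\mathbb{P}^3$ with hyperplane class $H$, Chern characters are the vectors of coefficients of $1,H,H^2,H^3$. For the Chern character $v=(-R,0,D,0)$ and the Bayer–Macrì–Toda stability conditions $\sigma_{0,\alpha,s}$ ($\alpha,s>0$; central charge $Z=-(\operatorname{ch}_3-(s+\frac16)\alpha^2\operatorname{ch}_1)+\sqrt{-1}(\operatorname{ch}_2-\frac{\alpha^2}{2}\operatorname{ch}_0)$), a numerical wall is a curve $(s+\frac16)\alpha^2=\alpha_0^2/6$ with $\alpha_0^2=6e/c$, where $(r,c,d,e)=\operatorname{ch}(A)$ for some $A\in D^b(\mathbb{P}^3)$ with $c>0$ satisfying $0<d<D$, $0<c(6e)\le\min\{4d^2,4(D-d)^2\}$, and $-\frac{c(2D-2d)}{6e}-R\le r\le\frac{2cd}{6e}$. (Being the Chern character of an object forces in particular $r,c\in\mathbb{Z}$, $d-\frac{c^2}{2}\in\mathbb{Z}$, $2e-cd+\frac{c^3}{6}\in\mathbb{Z}$, $e-\frac c6\in\mathbb{Z}$.) *)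

theory Defs
  imports Complex_Main
begin

text \<open>Chern characters on P^3 are vectors (ch0,ch1,ch2,ch3) of coefficients of 1,H,H^2,H^3.
  ch(O(k)) = (1, k, k^2/2, k^3/6).  The numerical Chern characters of objects of D^b(P^3)
  are exactly the integer combinations of ch(O), ch(O(1)), ch(O(2)), ch(O(3))
  (the line bundles O(k), k=0..3, generate K_0(P^3)).\<close>

definition ch_line_bundle :: "int \<Rightarrow> real \<times> real \<times> real \<times> real" where
  "ch_line_bundle k = (1, real_of_int k, (real_of_int k)^2 / 2, (real_of_int k)^3 / 6)"

definition is_chern_character :: "real \<times> real \<times> real \<times> real \<Rightarrow> bool" where
  "is_chern_character v \<longleftrightarrow>
     (\<exists>a :: int \<Rightarrow> int.
        v = ((\<Sum>k\<in>{0..3}. of_int (a k) * fst (ch_line_bundle k)),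
             (\<Sum>k\<in>{0..3}. of_int (a k) * fst (snd (ch_line_bundle k))),
             (\<Sum>k\<in>{0..3}. of_int (a k) * fst (snd (snd (ch_line_bundle k)))),
             (\<Sum>k\<in>{0..3}. of_int (a k) * snd (snd (snd (ch_line_bundle k))))))"

text \<open>A tuple (r,c,d,e) = ch(A) defines a numerical wall for v = (-R,0,D,0)
  (with respect to sigma_{0,alpha,s}).\<close>

definition numerical_wall :: "real \<Rightarrow> real \<Rightarrow> real \<times> real \<times> real \<times> real \<Rightarrow> bool" where
  "numerical_wall R D w \<longleftrightarrow>
     (case w of (r, c, d, e) \<Rightarrow>
        is_chern_character (r, c, d, e) \<and> c > 0 \<and>
        0 < d \<and> d < D \<and>
        0 < c * (6 * e) \<and> c * (6 * e) \<le> min (4 * d^2) (4 * (D - d)^2) \<and>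
        - (c * (2 * D - 2 * d)) / (6 * e) - R \<le> r \<and> r \<le> (2 * c * d) / (6 * e))"

definition wall_alpha0 :: "real \<times> real \<times> real \<times> real \<Rightarrow> real" where
  "wall_alpha0 w = (case w of (r, c, d, e) \<Rightarrow> sqrt (6 * e / c))"

definition wall_alpha0_values :: "real \<Rightarrow> real \<Rightarrow> real set" where
  "wall_alpha0_values R D = wall_alpha0 ` {w. numerical_wall R D w}"

end

theory Submission imports Defs begin
lemma int03: "{0..3::int} = {0,1,2,3}" by auto
lemma chern_int:
  assumes "is_chern_character (r,c,d,e)"
  shows "\<exists>ci ni::int. c = of_int ci \<and> 6*e = of_int ni"
proof -
  from assms obtain a :: "int \<Rightarrow> int" where
    h: "(r,c,d,e) = ((\<Sum>k\<in>{0..3}. of_int (a k) * fst (ch_line_bundle k)),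
             (\<Sum>k\<in>{0..3}. of_int (a k) * fst (snd (ch_line_bundle k))),
             (\<Sum>k\<in>{0..3}. of_int (a k) * fst (snd (snd (ch_line_bundle k)))),
             (\<Sum>k\<in>{0..3}. of_int (a k) * snd (snd (snd (ch_line_bundle k)))))"
    unfolding is_chern_character_def by blast
  have c: "c = of_int (a 1 + 2 * a 2 + 3 * a 3)"
    using h by (simp add: int03 ch_line_bundle_def)
  have e: "6*e = of_int (a 1 + 8 * a 2 + 27 * a 3)"
    using h by (simp add: int03 ch_line_bundle_def)
  show ?thesis using c e by blast
qed

lemma chern_ex:
  fixes k m :: int
  shows "is_chern_character (0, 1, real_of_int k + 1/2, (6*real_of_int m+1)/6)"
  unfolding is_chern_character_def
  apply (rule exI[where x="\<lambda>i. if i=0 then -1+2*k-m else if i=1 then 1-5*k+3*m else if i=2 then 4*k-3*m else m-k"])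
  apply (simp add: int03 ch_line_bundle_def)
  apply (simp add: field_simps)
  done

lemma wall_bound:
  assumes "numerical_wall R D w"
  shows "\<exists>c n::int. 1 \<le> c \<and> c \<le> \<lceil>D^2\<rceil> \<and> 1 \<le> n \<and> n \<le> \<lceil>D^2\<rceil> \<and> wall_alpha0 w = sqrt (n / c)
     \<and> wall_alpha0 w \<le> \<bar>D\<bar>"
proof -
  obtain r c d e where w: "w = (r,c,d,e)" by (cases w) auto
  have W: "is_chern_character (r,c,d,e)" "c > 0" "0 < d" "d < D" "0 < c*(6*e)"
    "c*(6*e) \<le> min (4*d^2) (4*(D-d)^2)"
    using assms unfolding numerical_wall_def w by auto
  obtain ci ni :: int where ci: "c = of_int ci" and ni: "6*e = of_int ni"
    using chern_int[OF W(1)] by blast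
  have ci1: "ci \<ge> 1" using W(2) ci by simp
  have e0: "e > 0" using W(2) W(5) by (simp add: zero_less_mult_iff)
  have ni1: "ni \<ge> 1" using e0 ni by simp
  have md: "min (4*d^2) (4*(D-d)^2) \<le> D^2"
  proof (cases "d \<le> D/2")
    case True
    have "d^2 \<le> (D/2)^2" using True W(3) by (intro power_mono) auto
    then show ?thesis by (simp add: power_divide)
  next
    case False
    have "(D-d)^2 \<le> (D/2)^2" using False W(4) by (intro power_mono) auto
    then show ?thesis by (simp add: power_divide)
  qed
  have prod: "c*(6*e) \<le> D^2" using W(6) md by linarith
  have cle: "ci \<le> \<lceil>D^2\<rceil>"
  proof -
    have "c \<le> c*(6*e)" using ci1 ci ni ni1 by simp
    then have "real_of_int ci \<le> D^2" using prod ci by linarith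
    then show ?thesis by linarith
  qed
  have nle: "ni \<le> \<lceil>D^2\<rceil>"
  proof -
    have "6*e \<le> c*(6*e)" using ci1 ci ni ni1 by simp
    then have "real_of_int ni \<le> D^2" using prod ni by linarith
    then show ?thesis by linarith
  qed
  have a0: "wall_alpha0 w = sqrt (ni / ci)" unfolding w wall_alpha0_def using ni ci by simp
  have nD: "real_of_int ni \<le> D^2"
  proof -
    have "6*e \<le> c*(6*e)" using ci1 ci ni ni1 by simp
    then show ?thesis using prod ni by linarith
  qed
  have "real_of_int ni / real_of_int ci \<le> real_of_int ni"
    using ci1 ni1 by (simp add: divide_le_eq)
  then have "real_of_int ni / real_of_int ci \<le> D^2" using nD by linarith
  then have "sqrt (real_of_int ni / real_of_int ci) \<le> sqrt (D^2)" by (rule real_sqrt_le_mono)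
  then have "wall_alpha0 w \<le> \<bar>D\<bar>" using a0 by simp
  then show ?thesis using a0 ci1 cle ni1 nle by blast
qed

lemma exist_m:
  fixes k :: int
  assumes "k \<ge> 0"
  shows "\<exists>m::int. m \<ge> 0 \<and> 6*m+1 \<le> (2*k+1)^2 \<and> (2*k+1)^2 - 2 \<le> 6*m+1"
proof -
  define q where "q = k div 3"
  have q0: "q \<ge> 0" using assms q_def by simp
  have "k = 3*q \<or> k = 3*q+1 \<or> k = 3*q+2" unfolding q_def by presburger
  then show ?thesis
  proof (elim disjE)
    assume k: "k = 3*q"
    show ?thesis
      by (rule exI[where x="2*q*(3*q+1)"]) (use q0 k in \<open>auto simp: algebra_simps power2_eq_square\<close>)
  next
    assume k: "k = 3*q+1"
    show ?thesis
      by (rule exI[where x="6*q^2+6*q+1"]) (use q0 k in \<open>auto simp: algebra_simps power2_eq_square\<close>)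
  next
    assume k: "k = 3*q+2"
    show ?thesis
      by (rule exI[where x="6*q^2+10*q+4"]) (use q0 k in \<open>auto simp: algebra_simps power2_eq_square\<close>)
  qed
qed

theorem proposition4p1:
  fixes R D :: int
  assumes "R \<ge> 0" and "D > 0"
  shows "finite (wall_alpha0_values (real_of_int R) (real_of_int D))
       \<and> wall_alpha0_values (real_of_int R) (real_of_int D) \<noteq> {}
       \<and> real_of_int D - 2 < Max (wall_alpha0_values (real_of_int R) (real_of_int D))
       \<and> Max (wall_alpha0_values (real_of_int R) (real_of_int D)) \<le> real_of_int D"
proof -
  let ?S = "wall_alpha0_values (real_of_int R) (real_of_int D)"
  let ?N = "\<lceil>(real_of_int D)^2\<rceil>"
  have sub: "?S \<subseteq> (\<lambda>(c,n). sqrt (real_of_int n / real_of_int c)) ` ({1..?N} \<times> {1..?N})"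
  proof
    fix x assume "x \<in> ?S"
    then obtain w where w: "numerical_wall R D w" "x = wall_alpha0 w"
      unfolding wall_alpha0_values_def by auto
    from wall_bound[OF w(1)] obtain c n :: int where
      "1 \<le> c" "c \<le> ?N" "1 \<le> n" "n \<le> ?N" "wall_alpha0 w = sqrt (n / c)" by blast
    then show "x \<in> (\<lambda>(c,n). sqrt (real_of_int n / real_of_int c)) ` ({1..?N} \<times> {1..?N})"
      using w(2) by force
  qed
  have fin: "finite ?S" by (rule finite_subset[OF sub]) auto
  have ub: "\<forall>x\<in>?S. x \<le> real_of_int D"
  proof
    fix x assume "x \<in> ?S"
    then obtain w where w: "numerical_wall R D w" "x = wall_alpha0 w"
      unfolding wall_alpha0_values_def by auto
    from wall_bound[OF w(1)] w(2) assms(2) show "x \<le> real_of_int D" by auto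
  qed
  define k where "k = (D - 1) div 2"
  have k0: "k \<ge> 0" and kD: "2*k+1 \<le> D" and kD2: "D \<le> 2*k+2" using assms(2) unfolding k_def by auto
  obtain m :: int where m: "m \<ge> 0" "6*m+1 \<le> (2*k+1)^2" "(2*k+1)^2 - 2 \<le> 6*m+1"
    using exist_m[OF k0] by blast
  define w where "w = (0::real, 1::real, real_of_int k + 1/2, (6*real_of_int m+1)/6)"
  have rm: "real_of_int (6*m+1) \<le> real_of_int ((2*k+1)^2)" using m(2) by linarith
  have rm2: "real_of_int ((2*k+1)^2) - 2 \<le> real_of_int (6*m+1)" using m(3) by linarith
  define dd :: real where "dd = real_of_int k + 1/2"
  define ee :: real where "ee = (6*real_of_int m+1)/6"
  have ee6: "6*ee = real_of_int (6*m+1)" unfolding ee_def by simp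
  have eepos: "6*ee > 0" using ee6 m(1) by simp
  have dd4: "4*dd^2 = real_of_int ((2*k+1)^2)" unfolding dd_def by (simp add: power2_eq_square algebra_simps)
  have Dd: "real_of_int D - dd \<ge> dd"
  proof -
    have "real_of_int (2*k+1) \<le> real_of_int D" using kD by linarith
    then show ?thesis unfolding dd_def by simp
  qed
  have dd0: "dd > 0" unfolding dd_def using k0 by simp
  have Dd4: "4*dd^2 \<le> 4*(real_of_int D - dd)^2"
    using power_mono[OF Dd, of 2] dd0 by simp
  have c1: "1*(6*ee) \<le> min (4*dd^2) (4*(real_of_int D - dd)^2)"
    using rm dd4 Dd4 ee6 by simp
  have c2: "- (1 * (2 * real_of_int D - 2 * dd)) / (6 * ee) - real_of_int R \<le> 0"
  proof -
    have "0 \<le> (1 * (2 * real_of_int D - 2 * dd)) / (6 * ee)" using Dd dd0 eepos by simp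
    moreover have "0 \<le> real_of_int R" using assms(1) by simp
    ultimately show ?thesis by linarith
  qed
  have c3: "0 \<le> (2 * 1 * dd) / (6 * ee)" using dd0 eepos by simp
  have w_eq: "w = (0, 1, dd, ee)" unfolding w_def dd_def ee_def by simp
  have wall: "numerical_wall R D w"
    unfolding numerical_wall_def w_eq prod.case
    using chern_ex[of k m] c1 c2 c3 eepos dd0 Dd
    unfolding dd_def[symmetric] ee_def[symmetric] by auto
  have inS: "wall_alpha0 w \<in> ?S" unfolding wall_alpha0_values_def using wall by auto
  have a0: "wall_alpha0 w = sqrt (real_of_int (6*m+1))" unfolding w_def wall_alpha0_def by simp
  have lb: "real_of_int D - 2 < wall_alpha0 w"
  proof (cases "D \<le> 2")
    case True
    have "0 < sqrt (real_of_int (6*m+1))" using m(1) by simp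
    then show ?thesis using a0 True by linarith
  next
    case False
    have "(real_of_int D - 2)^2 < real_of_int (6*m+1)"
    proof -
      have "(D - 2)^2 < (2*k+1)^2 - 2"
      proof (cases "D = 2*k+1")
        case True
        then show ?thesis using False by (simp add: power2_eq_square algebra_simps)
      next
        case F2: False
        then have D2: "D = 2*k+2" using kD kD2 by simp
        then have "k \<ge> 1" using False by simp
        then show ?thesis unfolding D2 by (simp add: power2_eq_square algebra_simps)
      qed
      then have "(D - 2)^2 < 6*m+1" using m(3) by linarith
      then have "real_of_int ((D - 2)^2) < real_of_int (6*m+1)" by linarith
      then show ?thesis by simp
    qed
    then have "sqrt ((real_of_int D - 2)^2) < sqrt (real_of_int (6*m+1))" by (rule real_sqrt_less_mono)
    then show ?thesis using a0 False by simp
  qed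
  have ne: "?S \<noteq> {}" using inS by auto
  have m1: "wall_alpha0 w \<le> Max ?S" by (rule Max_ge[OF fin inS])
  have m2: "Max ?S \<le> real_of_int D" using Max_le_iff[OF fin ne] ub by blast
  show ?thesis
    using fin ne lb m1 m2 by linarith
qed

end
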